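(* Let $\mathrm y^\star\in\mathbb R^{d|\mathbb V|}$ and $\zeta^\star=\mathcal E^T\mathrm y^\star$, and suppose $\mathbf 0\in k^{-1}(\mathrm y^\star)+\mathcal E\gamma(\zeta^\star)$. Suppose further that for every $e\in\mathbb E$ the function $\Gamma_e$ is strictly convex on a neighborhood of $\zeta^\star_e$. Define $G:\mathrm{IM}(\mathcal E^T)\to\mathbb R\cup\{\pm\infty\}$ by $G(\zeta)=\inf\{K^\star(\mathrm y):\mathcal E^T\mathrm y=\zeta\}$. Then $\zeta^\star$ is the unique minimizer of $\Gamma(\zeta)+G(\zeta)$ over $\zeta\in\mathrm{IM}(\mathcal E^T)$.
   Context: $\mathcal G=(\mathbb V,\mathbb E)$ is a finite graph with arbitrarily oriented edges and incidence matrix $E$ ($E_{ik}=-1$, $E_{jk}=1$ for edge $k=(i,j)$, other entries of column $k$ zero); $d\ge1$, $\mathcal E=E\otimes I_d$, $\mathrm{IM}(\mathcal E^T)$ the image of $\mathcal E^T$. For each $i\in\mathbb V$, $k_i\subseteq\mathbb R^d\times\mathbb R^d$ (agent steady-state input-output relation) and for each $e\in\mathbb E$, $\gamma_e\subseteq\mathbb R^d\times\mathbb R^d$ (controller steady-state relation) are maximal cyclically monotone (a relation $R$ is cyclically monotone if $\sum_{i=1}^N y_i^T(u_i-u_{i-1})\ge0$ for all $N\ge1$ and $(u_1,y_1),\dots,(u_N,y_N)\in R$, $u_0=u_N$; maximal if not strictly contained in a larger such relation), so $k_i=\partial K_i$, $\gamma_e=\partial\Gamma_e$ for closed proper convex functions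 $K_i,\Gamma_e:\mathbb R^d\to\mathbb R\cup\{+\infty\}$. $k,\gamma$ are stacked relations, viewed as set-valued maps with $k^{-1}(\mathrm y)=\{\mathrm u:(\mathrm u,\mathrm y)\in k\}$, $\gamma(\zeta)=\{\mu:(\zeta,\mu)\in\gamma\}$. $K(\mathrm u)=\sum_iK_i(\mathrm u_i)$, $\Gamma(\zeta)=\sum_e\Gamma_e(\zeta_e)$, $K^\star(y)=\sup_u\{y^Tu-K(u)\}$. $\mathcal ES=\{\mathcal Es:s\in S\}$, $A+B$ Minkowski sum. *)

theory Defs
  imports "HOL-Analysis.Analysis"
begin

definition cyclically_monotone :: "('a::real_inner \<times> 'a) set \<Rightarrow> bool" where
  "cyclically_monotone R \<longleftrightarrow>
     (\<forall>(N::nat) (u::nat \<Rightarrow> 'a) (y::nat \<Rightarrow> 'a).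
        N \<ge> 1 \<longrightarrow> (\<forall>i\<in>{1..N}. (u i, y i) \<in> R) \<longrightarrow> u 0 = u N \<longrightarrow>
        0 \<le> (\<Sum>i=1..N. y i \<bullet> (u i - u (i - 1))))"

definition maximal_cyclically_monotone :: "('a::real_inner \<times> 'a) set \<Rightarrow> bool" where
  "maximal_cyclically_monotone R \<longleftrightarrow>
     cyclically_monotone R \<and>
     (\<forall>R'. cyclically_monotone R' \<longrightarrow> R \<subseteq> R' \<longrightarrow> R' = R)"

definition epigraph :: "('a \<Rightarrow> ereal) \<Rightarrow> ('a \<times> real) set" where
  "epigraph f = {(x, r). f x \<le> ereal r}"

definition closed_proper_convex :: "('a::real_normed_vector \<Rightarrow> ereal) \<Rightarrow> bool" where
  "closed_proper_convex f \<longleftrightarrow>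
     (\<exists>x. f x < \<infinity>) \<and> (\<forall>x. - \<infinity> < f x) \<and>
     convex (epigraph f) \<and> closed (epigraph f)"

definition subdiff_graph :: "('a::real_inner \<Rightarrow> ereal) \<Rightarrow> ('a \<times> 'a) set" where
  "subdiff_graph f =
     {(u, y). \<exists>c. f u = ereal c \<and> (\<forall>v. ereal (c + y \<bullet> (v - u)) \<le> f v)}"

definition strictly_convex_on_ereal :: "'a::real_vector set \<Rightarrow> ('a \<Rightarrow> ereal) \<Rightarrow> bool" where
  "strictly_convex_on_ereal S f \<longleftrightarrow>
     (\<forall>x\<in>S. \<forall>y\<in>S. \<forall>t::real. x \<noteq> y \<longrightarrow> 0 < t \<longrightarrow> t < 1 \<longrightarrow>
        f (t *\<^sub>R x + (1 - t) *\<^sub>R y) < ereal t * f x + ereal (1 - t) * f y)"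

text \<open>Action of \<E>^T = (E \<otimes> I_d)^T on stacked vertex vectors: edge e = (src e, tgt e)
  has column entries -1 at src e, +1 at tgt e.\<close>
definition incT :: "('e \<Rightarrow> 'v) \<Rightarrow> ('e \<Rightarrow> 'v) \<Rightarrow> ('v \<Rightarrow> 'a::ab_group_add) \<Rightarrow> ('e \<Rightarrow> 'a)" where
  "incT src tgt y = (\<lambda>e. y (tgt e) - y (src e))"

text \<open>Action of \<E> = E \<otimes> I_d on stacked edge vectors.\<close>
definition inc :: "('e::finite \<Rightarrow> 'v) \<Rightarrow> ('e \<Rightarrow> 'v) \<Rightarrow> ('e \<Rightarrow> 'a::ab_group_add) \<Rightarrow> ('v \<Rightarrow> 'a)" where
  "inc src tgt \<mu> = (\<lambda>i. (\<Sum>e\<in>{e. tgt e = i}. \<mu> e) - (\<Sum>e\<in>{e. src e = i}. \<mu> e))"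

definition conjK :: "('v::finite \<Rightarrow> 'a::real_inner \<Rightarrow> ereal) \<Rightarrow> ('v \<Rightarrow> 'a) \<Rightarrow> ereal" where
  "conjK K y = (SUP u. ereal (\<Sum>i\<in>UNIV. y i \<bullet> u i) - (\<Sum>i\<in>UNIV. K i (u i)))"

definition Gfun :: "('e \<Rightarrow> 'v::finite) \<Rightarrow> ('e \<Rightarrow> 'v) \<Rightarrow> ('v \<Rightarrow> 'a::real_inner \<Rightarrow> ereal)
                    \<Rightarrow> ('e \<Rightarrow> 'a) \<Rightarrow> ereal" where
  "Gfun src tgt K \<zeta> = (INF y\<in>{y. incT src tgt y = \<zeta>}. conjK K y)"

end

theory Submission imports Defs begin

lemma fiber_sum:
  fixes h :: "'e::finite \<Rightarrow> 'v::finite" and f :: "'e \<Rightarrow> 'v \<Rightarrow> 'b::comm_monoid_add"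
  shows "(\<Sum>i\<in>UNIV. \<Sum>e\<in>{e. h e = i}. f e i) = (\<Sum>e\<in>UNIV. f e (h e))"
proof -
  have "(\<Sum>i\<in>UNIV. \<Sum>e\<in>{e. h e = i}. f e i) = (\<Sum>i\<in>UNIV. \<Sum>e\<in>{e. e \<in> UNIV \<and> h e = i}. f e (h e))"
    by (intro sum.cong) auto
  also have "\<dots> = (\<Sum>e\<in>UNIV. f e (h e))"
    by (rule sum.group) auto
  finally show ?thesis .
qed

lemma inc_adj:
  fixes src tgt :: "'e::finite \<Rightarrow> 'v::finite" and w :: "'v \<Rightarrow> 'a::real_inner"
  shows "(\<Sum>i\<in>UNIV. w i \<bullet> inc src tgt \<mu> i) = (\<Sum>e\<in>UNIV. \<mu> e \<bullet> incT src tgt w e)"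
proof -
  have "(\<Sum>i\<in>UNIV. w i \<bullet> inc src tgt \<mu> i)
     = (\<Sum>i\<in>UNIV. \<Sum>e\<in>{e. tgt e = i}. w i \<bullet> \<mu> e) - (\<Sum>i\<in>UNIV. \<Sum>e\<in>{e. src e = i}. w i \<bullet> \<mu> e)"
    by (simp add: inc_def inner_diff_right inner_sum_right sum_subtractf)
  also have "\<dots> = (\<Sum>e\<in>UNIV. w (tgt e) \<bullet> \<mu> e) - (\<Sum>e\<in>UNIV. w (src e) \<bullet> \<mu> e)"
    by (simp only: fiber_sum)
  also have "\<dots> = (\<Sum>e\<in>UNIV. \<mu> e \<bullet> incT src tgt w e)"
    by (simp add: incT_def inner_diff_right sum_subtractf inner_commute)
  finally show ?thesis .
qed

lemma ereal_shift: "S + ereal r \<le> ereal s \<Longrightarrow> S \<le> ereal (s - r)"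
  by (cases S) auto

lemma sum_eq_lower:
  fixes f :: "'e::finite \<Rightarrow> ereal" and g :: "'e \<Rightarrow> real"
  assumes "\<forall>e. ereal (g e) \<le> f e" and "(\<Sum>e\<in>UNIV. f e) \<le> ereal (\<Sum>e\<in>UNIV. g e)"
  shows "f e0 = ereal (g e0)"
proof -
  have "(\<Sum>e\<in>UNIV. f e) = f e0 + (\<Sum>e\<in>UNIV-{e0}. f e)"
    by (simp add: sum.remove)
  moreover have "(\<Sum>e\<in>UNIV-{e0}. ereal (g e)) \<le> (\<Sum>e\<in>UNIV-{e0}. f e)"
    using assms(1) by (intro sum_mono) auto
  ultimately have "f e0 + ereal (\<Sum>e\<in>UNIV-{e0}. g e) \<le> ereal (\<Sum>e\<in>UNIV. g e)"
    using assms(2) by (metis add_left_mono order_trans sum_ereal)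
  then have "f e0 \<le> ereal ((\<Sum>e\<in>UNIV. g e) - (\<Sum>e\<in>UNIV-{e0}. g e))"
    by (rule ereal_shift)
  also have "(\<Sum>e\<in>UNIV. g e) - (\<Sum>e\<in>UNIV-{e0}. g e) = g e0"
    using sum.remove[of UNIV e0 g] by simp
  finally show ?thesis using assms(1) by (metis antisym)
qed

lemma affine_seg:
  fixes f :: "'a::real_inner \<Rightarrow> ereal"
  assumes cpc: "closed_proper_convex f"
    and sub: "\<forall>v. ereal (c + \<mu> \<bullet> (v - z)) \<le> f v"
    and fz: "f z = ereal c"
    and fx: "f x = ereal (c + \<mu> \<bullet> (x - z))"
    and t: "0 \<le> t" "t \<le> 1"
  shows "f (z + t *\<^sub>R (x - z)) = ereal (c + t * (\<mu> \<bullet> (x - z)))"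
proof -
  have cv: "convex (epigraph f)" using cpc by (simp add: closed_proper_convex_def)
  have "(x, c + \<mu> \<bullet> (x - z)) \<in> epigraph f" "(z, c) \<in> epigraph f"
    using fx fz by (auto simp: epigraph_def)
  from convexD[OF cv this t(1) _ ] t
  have "t *\<^sub>R (x, c + \<mu> \<bullet> (x - z)) + (1 - t) *\<^sub>R (z, c) \<in> epigraph f" by auto
  moreover have "t *\<^sub>R (x, c + \<mu> \<bullet> (x - z)) + (1 - t) *\<^sub>R (z, c)
      = (z + t *\<^sub>R (x - z), c + t * (\<mu> \<bullet> (x - z)))"
    by (simp add: algebra_simps)
  ultimately have up: "f (z + t *\<^sub>R (x - z)) \<le> ereal (c + t * (\<mu> \<bullet> (x - z)))"
    by (simp add: epigraph_def)
  have "ereal (c + \<mu> \<bullet> ((z + t *\<^sub>R (x - z)) - z)) \<le> f (z + t *\<^sub>R (x - z))"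
    using sub by blast
  then have "ereal (c + t * (\<mu> \<bullet> (x - z))) \<le> f (z + t *\<^sub>R (x - z))" by simp
  with up show ?thesis by (metis antisym)
qed

lemma strict_contra:
  fixes f :: "'a::real_inner \<Rightarrow> ereal"
  assumes cpc: "closed_proper_convex f"
    and sub: "\<forall>v. ereal (c + \<mu> \<bullet> (v - z)) \<le> f v"
    and fz: "f z = ereal c"
    and fx: "f x = ereal (c + \<mu> \<bullet> (x - z))"
    and ep: "\<epsilon> > 0" and sc: "strictly_convex_on_ereal (ball z \<epsilon>) f"
  shows "x = z"
proof (rule ccontr)
  assume ne: "x \<noteq> z"
  define \<delta> where "\<delta> = x - z"
  define a where "a = \<mu> \<bullet> \<delta>"
  have nd: "norm \<delta> > 0" using ne by (simp add: \<delta>_def)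
  define s where "s = min 1 (\<epsilon> / (2 * norm \<delta>))"
  have s0: "0 < s" "s \<le> 1" using nd ep by (auto simp: s_def)
  have "s * norm \<delta> \<le> (\<epsilon> / (2 * norm \<delta>)) * norm \<delta>"
    using nd by (intro mult_right_mono) (auto simp: s_def)
  also have "\<dots> = \<epsilon> / 2" using nd by (simp add: field_simps)
  finally have sn: "s * norm \<delta> < \<epsilon>" using ep by linarith
  define p where "p = z + s *\<^sub>R \<delta>"
  have fp: "f p = ereal (c + s * a)"
    using affine_seg[OF cpc sub fz fx, of s] s0 by (simp add: p_def \<delta>_def a_def)
  have fq: "f (z + (s/2) *\<^sub>R \<delta>) = ereal (c + (s/2) * a)"
    using affine_seg[OF cpc sub fz fx, of "s/2"] s0 by (simp add: \<delta>_def a_def)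
  have pin: "p \<in> ball z \<epsilon>" using sn s0 by (simp add: p_def dist_norm)
  have zin: "z \<in> ball z \<epsilon>" using ep by simp
  have pz: "p \<noteq> z" using s0 nd by (simp add: p_def)
  have "f ((1/2) *\<^sub>R p + (1 - 1/2) *\<^sub>R z) < ereal (1/2) * f p + ereal (1 - 1/2) * f z"
    by (rule sc[unfolded strictly_convex_on_ereal_def, rule_format, OF pin zin pz]) auto
  moreover have "(1/2) *\<^sub>R p + (1 - 1/2) *\<^sub>R z = z + (s/2) *\<^sub>R \<delta>"
    by (simp add: p_def algebra_simps flip: scaleR_add_left)
  ultimately have "ereal (c + (s/2) * a) < ereal (1/2) * ereal (c + s * a) + ereal (1/2) * ereal c"
    using fp fq fz by simp
  then show False by (simp add: field_simps)
qed

theorem mainTheorem8: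
  fixes src tgt :: "'e::finite \<Rightarrow> 'v::finite"
    and k :: "'v \<Rightarrow> ((real^'d) \<times> (real^'d)) set"
    and gam :: "'e \<Rightarrow> ((real^'d) \<times> (real^'d)) set"
    and K :: "'v \<Rightarrow> real^'d \<Rightarrow> ereal"
    and Gam :: "'e \<Rightarrow> real^'d \<Rightarrow> ereal"
    and ystar :: "'v \<Rightarrow> real^'d"
    and zstar :: "'e \<Rightarrow> real^'d"
  assumes k_max: "\<forall>i. maximal_cyclically_monotone (k i)"
    and gam_max: "\<forall>e. maximal_cyclically_monotone (gam e)"
    and K_cpc: "\<forall>i. closed_proper_convex (K i)"
    and Gam_cpc: "\<forall>e. closed_proper_convex (Gam e)"
    and k_sub: "\<forall>i. k i = subdiff_graph (K i)"
    and gam_sub: "\<forall>e. gam e = subdiff_graph (Gam e)"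
    and zstar_def: "zstar = incT src tgt ystar"
    and zero_in: "\<exists>u \<mu>. (\<forall>i. (u i, ystar i) \<in> k i) \<and> (\<forall>e. (zstar e, \<mu> e) \<in> gam e) \<and>
                        (\<forall>i. u i + inc src tgt \<mu> i = 0)"
    and strict: "\<forall>e. \<exists>\<epsilon>>0. strictly_convex_on_ereal (ball (zstar e) \<epsilon>) (Gam e)"
  shows "zstar \<in> range (incT src tgt) \<and>
         (\<forall>\<zeta>\<in>range (incT src tgt).
            (\<Sum>e\<in>UNIV. Gam e (zstar e)) + Gfun src tgt K zstar
              \<le> (\<Sum>e\<in>UNIV. Gam e (\<zeta> e)) + Gfun src tgt K \<zeta>) \<and>
         (\<forall>\<zeta>\<in>range (incT src tgt).
            (\<Sum>e\<in>UNIV. Gam e (\<zeta> e)) + Gfun src tgt K \<zeta>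
              \<le> (\<Sum>e\<in>UNIV. Gam e (zstar e)) + Gfun src tgt K zstar \<longrightarrow> \<zeta> = zstar)"
proof -
  obtain u \<mu> where hu: "\<forall>i. (u i, ystar i) \<in> k i" and h\<mu>: "\<forall>e. (zstar e, \<mu> e) \<in> gam e"
    and h0: "\<forall>i. u i + inc src tgt \<mu> i = 0" using zero_in by blast
  have "\<forall>i. \<exists>b. K i (u i) = ereal b \<and> (\<forall>v. ereal (b + ystar i \<bullet> (v - u i)) \<le> K i v)"
    using hu k_sub by (auto simp: subdiff_graph_def)
  then obtain b where hb: "\<And>i. K i (u i) = ereal (b i)"
     "\<And>i v. ereal (b i + ystar i \<bullet> (v - u i)) \<le> K i v" by metis
  have "\<forall>e. \<exists>c. Gam e (zstar e) = ereal c \<and> (\<forall>v. ereal (c + \<mu> e \<bullet> (v - zstar e)) \<le> Gam e v)"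
    using h\<mu> gam_sub by (auto simp: subdiff_graph_def)
  then obtain c where hc: "\<And>e. Gam e (zstar e) = ereal (c e)"
     "\<And>e v. ereal (c e + \<mu> e \<bullet> (v - zstar e)) \<le> Gam e v" by metis
  define P where "P = (\<lambda>\<zeta>::'e \<Rightarrow> real^'d. \<Sum>e\<in>UNIV. \<mu> e \<bullet> \<zeta> e)"
  have uinc: "\<And>i. u i = - inc src tgt \<mu> i" using h0 by (metis add.commute add_eq_0_iff)
  have yu: "\<And>y. (\<Sum>i\<in>UNIV. y i \<bullet> u i) = - P (incT src tgt y)"
    unfolding P_def by (simp add: uinc inner_minus_right sum_negf inc_adj)
  define B where "B = (\<Sum>i\<in>UNIV. ystar i \<bullet> u i) - (\<Sum>i\<in>UNIV. b i)"
  have Bz: "B = - P zstar - (\<Sum>i\<in>UNIV. b i)" using yu[of ystar] zstar_def B_def by simp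
  have Lb: "ereal (- P (incT src tgt y) - (\<Sum>i\<in>UNIV. b i)) \<le> conjK K y" for y
  proof -
    have "ereal (\<Sum>i\<in>UNIV. y i \<bullet> u i) - (\<Sum>i\<in>UNIV. K i (u i)) \<le> conjK K y"
      unfolding conjK_def by (rule SUP_upper) auto
    then show ?thesis by (simp add: hb yu)
  qed
  have Ub: "conjK K ystar \<le> ereal B"
    unfolding conjK_def
  proof (rule SUP_least)
    fix u' :: "'v \<Rightarrow> real^'d"
    have "(\<Sum>i\<in>UNIV. ereal (b i + ystar i \<bullet> (u' i - u i))) \<le> (\<Sum>i\<in>UNIV. K i (u' i))"
      by (intro sum_mono hb(2))
    moreover have "(\<Sum>i\<in>UNIV. b i + ystar i \<bullet> (u' i - u i)) = (\<Sum>i\<in>UNIV. ystar i \<bullet> u' i) - B"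
      by (simp add: B_def inner_diff_right sum.distrib sum_subtractf)
    ultimately have X: "ereal ((\<Sum>i\<in>UNIV. ystar i \<bullet> u' i) - B) \<le> (\<Sum>i\<in>UNIV. K i (u' i))" by simp
    show "ereal (\<Sum>i\<in>UNIV. ystar i \<bullet> u' i) - (\<Sum>i\<in>UNIV. K i (u' i)) \<le> ereal B"
      using X by (cases "\<Sum>i\<in>UNIV. K i (u' i)") auto
  qed
  have Gl: "ereal (- P \<zeta> - (\<Sum>i\<in>UNIV. b i)) \<le> Gfun src tgt K \<zeta>" for \<zeta>
    unfolding Gfun_def by (rule INF_greatest) (use Lb in auto)
  have Gz: "Gfun src tgt K zstar \<le> ereal B"
  proof -
    have "Gfun src tgt K zstar \<le> conjK K ystar"
      unfolding Gfun_def by (rule INF_lower) (simp add: zstar_def)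
    then show ?thesis using Ub by simp
  qed
  have Gam_low: "ereal (\<Sum>e\<in>UNIV. c e + \<mu> e \<bullet> (\<zeta> e - zstar e)) \<le> (\<Sum>e\<in>UNIV. Gam e (\<zeta> e))" for \<zeta>
  proof -
    have "(\<Sum>e\<in>UNIV. ereal (c e + \<mu> e \<bullet> (\<zeta> e - zstar e))) \<le> (\<Sum>e\<in>UNIV. Gam e (\<zeta> e))"
      by (intro sum_mono hc(2))
    then show ?thesis by simp
  qed
  have sumz: "(\<Sum>e\<in>UNIV. Gam e (zstar e)) = ereal (\<Sum>e\<in>UNIV. c e)" by (simp add: hc)
  have Pd: "(\<Sum>e\<in>UNIV. c e + \<mu> e \<bullet> (\<zeta> e - zstar e)) = (\<Sum>e\<in>UNIV. c e) + P \<zeta> - P zstar" for \<zeta>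
    by (simp add: P_def inner_diff_right sum.distrib sum_subtractf)
  have LHS: "(\<Sum>e\<in>UNIV. Gam e (zstar e)) + Gfun src tgt K zstar \<le> ereal ((\<Sum>e\<in>UNIV. c e) + B)"
    using add_left_mono[OF Gz, of "ereal (\<Sum>e\<in>UNIV. c e)"] by (simp add: sumz)
  have RHS: "ereal ((\<Sum>e\<in>UNIV. c e) + B) \<le> (\<Sum>e\<in>UNIV. Gam e (\<zeta> e)) + Gfun src tgt K \<zeta>" for \<zeta>
  proof -
    have "ereal ((\<Sum>e\<in>UNIV. c e) + P \<zeta> - P zstar) + ereal (- P \<zeta> - (\<Sum>i\<in>UNIV. b i))
        \<le> (\<Sum>e\<in>UNIV. Gam e (\<zeta> e)) + Gfun src tgt K \<zeta>"
      using Gam_low[of \<zeta>] Gl[of \<zeta>] by (intro add_mono) (auto simp: Pd)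
    then show ?thesis by (simp add: Bz)
  qed
  have uniq: "\<zeta> = zstar" if le: "(\<Sum>e\<in>UNIV. Gam e (\<zeta> e)) + Gfun src tgt K \<zeta>
              \<le> (\<Sum>e\<in>UNIV. Gam e (zstar e)) + Gfun src tgt K zstar" for \<zeta>
  proof
    fix e
    have "(\<Sum>e\<in>UNIV. Gam e (\<zeta> e)) + ereal (- P \<zeta> - (\<Sum>i\<in>UNIV. b i)) \<le> ereal ((\<Sum>e\<in>UNIV. c e) + B)"
      using add_left_mono[OF Gl[of \<zeta>], of "\<Sum>e\<in>UNIV. Gam e (\<zeta> e)"] le LHS by (meson order_trans)
    then have "(\<Sum>e\<in>UNIV. Gam e (\<zeta> e)) \<le> ereal ((\<Sum>e\<in>UNIV. c e) + B - (- P \<zeta> - (\<Sum>i\<in>UNIV. b i)))"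
      by (rule ereal_shift)
    also have "(\<Sum>e\<in>UNIV. c e) + B - (- P \<zeta> - (\<Sum>i\<in>UNIV. b i)) = (\<Sum>e\<in>UNIV. c e + \<mu> e \<bullet> (\<zeta> e - zstar e))"
      by (simp add: Pd Bz)
    finally have "Gam e (\<zeta> e) = ereal (c e + \<mu> e \<bullet> (\<zeta> e - zstar e))"
      by (intro sum_eq_lower[where f="\<lambda>e. Gam e (\<zeta> e)"]) (auto intro: hc(2))
    moreover obtain \<epsilon> where "\<epsilon> > 0" "strictly_convex_on_ereal (ball (zstar e) \<epsilon>) (Gam e)"
      using strict by blast
    ultimately show "\<zeta> e = zstar e"
      using strict_contra[OF Gam_cpc[rule_format, of e], of "c e" "\<mu> e" "zstar e" "\<zeta> e"] hc by blast
  qed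
  show ?thesis
    using LHS RHS uniq zstar_def by (auto intro: order_trans)
qed

end
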